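(* Let $\tilde{\mathbf{G}}$ be a degree $2$ cover of $\mathbf{G}=\mathbf{GSp}_{2r}$ (split) with first Brylinski–Deligne invariant $Q_{0,1}$. Then the dual group $\tilde G^\vee$ is isomorphic to $GSp_{2r}$ if $r$ is odd, and to $PGSp_{2r}\times\mathbb{G}_m$ if $r$ is even.
   Context: For $\mathbf{GSp}_{2r}$ with a standard split maximal torus and Borel subgroup, let $e_0,\dots,e_r$ be a basis of the cocharacter lattice $Y$ and $f_0,\dots,f_r$ the dual basis of the character lattice $X$; simple roots are $\alpha_i=f_i-f_{i+1}$ ($1\le i\le r-1$), $\alpha_r=2f_r-f_0$, simple coroots $\alpha_i^\vee=e_i-e_{i+1}$ ($1\le i\le r-1$), $\alpha_r^\vee=e_r$. The Weyl group is $S_r\ltimes\mu_2^r$, with $S_r$ permuting indices $1,\dots,r$ (fixing $e_0$) and involutions $w_j$ with $w_j(e_j)=-e_j$, $w_j(e_i)=e_i$ for $i\ne j,0$, $w_j(e_0)=e_0+e_j$. For integers $\kappa,\nu$, $Q_{\kappa,\nu}$ is the unique Weyl-invariant quadratic form with $Q(e_0)=\kappa$ and $Q(e_i)=\nu$ for $1\le i\le r$. Dual group of a degree $n$ cover with first invariant $Q$: set $\beta_Q(y_1,y_2)=n^{-1}(Q(y_1+y_2)-Q(y_1)-Q(y_2))$, $Y_{Q,n}=\{y\in Y:\beta_Q(y,Y)\subset\mathbb{Z}\}$, $X_{Q,n}=\{x\in n^{-1}X:\langle x,Y_{Q,n}\rangle\subset\mathbb{Z}\}$; for each root $\phi$ put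 $n_\phi=n/\gcd(n,Q(\phi^\vee))$, $\tilde\phi=n_\phi^{-1}\phi$, $\tilde\phi^\vee=n_\phi\phi^\vee$. The dual group is the split reductive group whose root datum has character lattice $Y_{Q,n}$, roots $\{\tilde\phi^\vee\}$, cocharacter lattice $X_{Q,n}$, coroots $\{\tilde\phi\}$. *)

theory Defs
  imports Complex_Main "HOL-Library.Function_Algebras"
begin

text \<open>Vectors in Q^(N) (finitely many coordinates), used as ambient space for
  character and cocharacter lattices. Coordinates 0..r carry the basis e_0..e_r
  (resp. f_0..f_r).\<close>

type_synonym vec = "nat \<Rightarrow> rat"

definition ev :: "nat \<Rightarrow> vec" where
  "ev i = (\<lambda>j. if j = i then 1 else 0)"

definition smul :: "rat \<Rightarrow> vec \<Rightarrow> vec" where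
  "smul c v = (\<lambda>i. c * v i)"

definition Zvec :: "nat \<Rightarrow> vec set" where
  "Zvec r = {v. (\<forall>i. v i \<in> \<int>) \<and> (\<forall>i>r. v i = 0)}"

text \<open>A root datum: ambient dimension, character lattice X, cocharacter lattice Y,
  and the set of pairs (root, corresponding coroot).\<close>
record rdatum =
  rd_dim :: nat
  rd_X :: "vec set"
  rd_Y :: "vec set"
  rd_R :: "(vec \<times> vec) set"

definition rd_pair :: "rdatum \<Rightarrow> vec \<Rightarrow> vec \<Rightarrow> rat" where
  "rd_pair D x y = (\<Sum>i<rd_dim D. x i * y i)"

definition rd_iso :: "rdatum \<Rightarrow> rdatum \<Rightarrow> bool" where
  "rd_iso D D' \<longleftrightarrow> (\<exists>f g.
     bij_betw f (rd_X D) (rd_X D') \<and> bij_betw g (rd_Y D') (rd_Y D) \<and>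
     (\<forall>x\<in>rd_X D. \<forall>x'\<in>rd_X D. f (x + x') = f x + f x') \<and>
     (\<forall>y\<in>rd_Y D'. \<forall>y'\<in>rd_Y D'. g (y + y') = g y + g y') \<and>
     (\<forall>x\<in>rd_X D. \<forall>y\<in>rd_Y D'. rd_pair D' (f x) y = rd_pair D x (g y)) \<and>
     rd_R D' = {(f a, b') | a b b'. (a, b) \<in> rd_R D \<and> b' \<in> rd_Y D' \<and> g b' = b})"

text \<open>Roots of GSp_{2r} (paired with their coroots): simple roots
  f_i - f_{i+1}, 2 f_r - f_0 generate the root system
  +-(f_i - f_j), +-(f_i + f_j - f_0) (i<j), +-(2 f_i - f_0), with coroots
  +-(e_i - e_j), +-(e_i + e_j), +-e_i respectively.\<close>
definition GSp_pos_roots :: "nat \<Rightarrow> (vec \<times> vec) set" where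
  "GSp_pos_roots r =
     {(ev i - ev j, ev i - ev j) | i j. 1 \<le> i \<and> i < j \<and> j \<le> r}
   \<union> {(ev i + ev j - ev 0, ev i + ev j) | i j. 1 \<le> i \<and> i < j \<and> j \<le> r}
   \<union> {(smul 2 (ev i) - ev 0, ev i) | i. 1 \<le> i \<and> i \<le> r}"

definition GSp_roots :: "nat \<Rightarrow> (vec \<times> vec) set" where
  "GSp_roots r = GSp_pos_roots r \<union> (\<lambda>(a, b). (- a, - b)) ` GSp_pos_roots r"

definition GSp_datum :: "nat \<Rightarrow> rdatum" where
  "GSp_datum r = \<lparr>rd_dim = r + 1, rd_X = Zvec r, rd_Y = Zvec r, rd_R = GSp_roots r\<rparr>"

text \<open>PGSp_{2r} = GSp_{2r} / centre. The centre is the image of the cocharacter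
  z = 2 e_0 + e_1 + ... + e_r. Characters: those x with <x,z> = 0; cocharacters:
  Y / Z z, represented by the projection y |-> y - (y_0/2) z (which does not change
  the pairing with characters killing z).\<close>
definition zc :: "nat \<Rightarrow> vec" where
  "zc r = (\<lambda>i. if i = 0 then 2 else if i \<le> r then 1 else 0)"

definition proj_c :: "nat \<Rightarrow> vec \<Rightarrow> vec" where
  "proj_c r y = y - smul (y 0 / 2) (zc r)"

definition PGSp_datum :: "nat \<Rightarrow> rdatum" where
  "PGSp_datum r = \<lparr>rd_dim = r + 1,
     rd_X = {x \<in> Zvec r. (\<Sum>i\<le>r. x i * zc r i) = 0},
     rd_Y = proj_c r ` Zvec r,
     rd_R = {(a, proj_c r b) | a b. (a, b) \<in> GSp_roots r}\<rparr>"

definition times_Gm :: "rdatum \<Rightarrow> rdatum" where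
  "times_Gm D = \<lparr>rd_dim = rd_dim D + 1,
     rd_X = {x + smul (of_int c) (ev (rd_dim D)) | x c. x \<in> rd_X D},
     rd_Y = {y + smul (of_int c) (ev (rd_dim D)) | y c. y \<in> rd_Y D},
     rd_R = rd_R D\<rparr>"

text \<open>The Weyl-invariant quadratic form Q_{kappa,nu} on Y = Z^{r+1} with
  Q(e_0) = kappa and Q(e_i) = nu: invariance forces B(e_i,e_j) = 0 for distinct
  i,j >= 1 and B(e_0,e_j) = -nu, whence the formula below.\<close>
definition Qform :: "int \<Rightarrow> int \<Rightarrow> nat \<Rightarrow> vec \<Rightarrow> rat" where
  "Qform \<kappa> \<nu> r y = of_int \<kappa> * (y 0)^2 + of_int \<nu> * (\<Sum>i=1..r. (y i)^2)
                   - of_int \<nu> * y 0 * (\<Sum>i=1..r. y i)"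

definition betaQ :: "nat \<Rightarrow> (vec \<Rightarrow> rat) \<Rightarrow> vec \<Rightarrow> vec \<Rightarrow> rat" where
  "betaQ n Q y1 y2 = (Q (y1 + y2) - Q y1 - Q y2) / of_nat n"

definition YQn :: "nat \<Rightarrow> nat \<Rightarrow> (vec \<Rightarrow> rat) \<Rightarrow> vec set" where
  "YQn r n Q = {y \<in> Zvec r. \<forall>y'\<in>Zvec r. betaQ n Q y y' \<in> \<int>}"

definition XQn :: "nat \<Rightarrow> nat \<Rightarrow> (vec \<Rightarrow> rat) \<Rightarrow> vec set" where
  "XQn r n Q = {x. (\<forall>i>r. x i = 0) \<and> (\<forall>i. of_nat n * x i \<in> \<int>) \<and>
                   (\<forall>y\<in>YQn r n Q. (\<Sum>i\<le>r. x i * y i) \<in> \<int>)}"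

text \<open>n_phi = n / gcd(n, Q(phi^vee)), for a coroot b = phi^vee (Q is integral on Y).\<close>
definition n_phi :: "nat \<Rightarrow> (vec \<Rightarrow> rat) \<Rightarrow> vec \<Rightarrow> nat" where
  "n_phi n Q b = n div gcd n (nat \<bar>\<lfloor>Q b\<rfloor>\<bar>)"

definition cover_dual :: "nat \<Rightarrow> nat \<Rightarrow> (vec \<Rightarrow> rat) \<Rightarrow> rdatum" where
  "cover_dual r n Q = \<lparr>rd_dim = r + 1,
     rd_X = YQn r n Q,
     rd_Y = XQn r n Q,
     rd_R = {(smul (of_nat (n_phi n Q b)) b, smul (1 / of_nat (n_phi n Q b)) a)
             | a b. (a, b) \<in> GSp_roots r}\<rparr>"

end

theory Submission
  imports Defs
begin

definition Sm :: "nat \<Rightarrow> vec \<Rightarrow> rat" where "Sm r y = (\<Sum>i=1..r. y i)"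
definition Lr :: "nat \<Rightarrow> vec \<Rightarrow> vec" where
  "Lr r b = (\<lambda>l. if l = 0 then - Sm r b / 2 else b l)"

lemma sum_split0: "(\<Sum>i\<le>(r::nat). F i) = F 0 + (\<Sum>i=1..r. (F i::rat))"
  by (subst atMost_atLeast0, subst sum.atLeast_Suc_atMost) auto

lemma Sm_add[simp]: "Sm r (x + y) = Sm r x + Sm r y"
  by (simp add: Sm_def sum.distrib)
lemma Sm_smul[simp]: "Sm r (smul c y) = c * Sm r y"
  by (simp add: Sm_def smul_def sum_distrib_left)
lemma Sm_neg[simp]: "Sm r (- y) = - Sm r y"
  by (simp add: Sm_def sum_negf)
lemma Sm_diff[simp]: "Sm r (x - y) = Sm r x - Sm r y"
  by (simp add: Sm_def sum_subtractf)
lemma ev_apply[simp]: "ev i j = (if j = i then 1 else 0)"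
  by (simp add: ev_def)

lemma mult_if1[simp]: "(x::rat) * (if P then 1 else 0) = (if P then x else 0)" by simp
lemma mult_if2[simp]: "(if P then 1 else 0) * (x::rat) = (if P then x else 0)" by simp

lemma Sm_ev[simp]: "Sm r (ev i) = (if 1 \<le> i \<and> i \<le> r then 1 else 0)"
  by (simp add: Sm_def ev_def)

lemma Sm_Ints: "(\<And>i. y i \<in> \<int>) \<Longrightarrow> Sm r y \<in> \<int>"
  by (auto simp: Sm_def)

lemma Qform01: "Qform 0 1 r y = (\<Sum>i=1..r. (y i)^2) - y 0 * Sm r y"
  by (simp add: Qform_def Sm_def)

lemma betaQ_eq: "betaQ 2 (Qform 0 1 r) y y' =
   (\<Sum>i=1..r. y i * y' i) - (y 0 * Sm r y' + y' 0 * Sm r y) / 2"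
proof -
  have h: "(\<Sum>i=1..r. (y i + y' i)^2) = (\<Sum>i=1..r. (y i)^2) + 2 * (\<Sum>i=1..r. y i * y' i) + (\<Sum>i=1..r. (y' i)^2)"
    by (simp add: power2_sum sum.distrib sum_distrib_left mult.assoc)
  have "Qform 0 1 r (y + y') - Qform 0 1 r y - Qform 0 1 r y' =
     2 * (\<Sum>i=1..r. y i * y' i) - (y 0 * Sm r y' + y' 0 * Sm r y)"
    unfolding Qform01 plus_fun_apply h Sm_add by (simp add: algebra_simps)
  then show ?thesis by (simp add: betaQ_def diff_divide_distrib)
qed

lemma ev_Zvec: "i \<le> r \<Longrightarrow> ev i \<in> Zvec r"
  by (auto simp: Zvec_def ev_def)

lemma Zvec_diff: "x \<in> Zvec r \<Longrightarrow> y \<in> Zvec r \<Longrightarrow> x - y \<in> Zvec r"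
  by (auto simp: Zvec_def)

lemma YQn_char: assumes "r \<ge> 1"
  shows "YQn r 2 (Qform 0 1 r) = {y \<in> Zvec r. y 0 / 2 \<in> \<int> \<and> Sm r y / 2 \<in> \<int>}"
proof (intro set_eqI iffI)
  fix y assume "y \<in> YQn r 2 (Qform 0 1 r)"
  then have Z: "y \<in> Zvec r" and B: "\<And>y'. y' \<in> Zvec r \<Longrightarrow> betaQ 2 (Qform 0 1 r) y y' \<in> \<int>"
    by (auto simp: YQn_def)
  have "betaQ 2 (Qform 0 1 r) y (ev 0) \<in> \<int>" using B ev_Zvec by auto
  moreover have "(\<Sum>i=1..r. y i * ev 0 i) = 0" by (simp add: ev_def)
  ultimately have "- (Sm r y / 2) \<in> \<int>" by (simp add: betaQ_eq)
  then have s: "Sm r y / 2 \<in> \<int>" using Ints_minus by fastforce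
  have "betaQ 2 (Qform 0 1 r) y (ev 1) \<in> \<int>" using B ev_Zvec assms by auto
  moreover have "(\<Sum>i=1..r. y i * ev 1 i) = y 1" using assms
    by (simp add: ev_def)
  ultimately have d: "y 1 - y 0 / 2 \<in> \<int>" using assms by (simp add: betaQ_eq)
  have "y 1 \<in> \<int>" using Z by (auto simp: Zvec_def)
  from Ints_diff[OF this d] have "y 1 - (y 1 - y 0 / 2) \<in> \<int>" .
  then have "y 0 / 2 \<in> \<int>" by simp
  with Z s show "y \<in> {y \<in> Zvec r. y 0 / 2 \<in> \<int> \<and> Sm r y / 2 \<in> \<int>}" by auto
next
  fix y assume "y \<in> {y \<in> Zvec r. y 0 / 2 \<in> \<int> \<and> Sm r y / 2 \<in> \<int>}"
  then have Z: "y \<in> Zvec r" and a: "y 0 / 2 \<in> \<int>" and s: "Sm r y / 2 \<in> \<int>" by auto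
  show "y \<in> YQn r 2 (Qform 0 1 r)" unfolding YQn_def
  proof (intro CollectI conjI ballI Z)
    fix y' assume Z': "y' \<in> Zvec r"
    have e: "(y 0 * Sm r y' + y' 0 * Sm r y) / 2 = (y 0 / 2) * Sm r y' + y' 0 * (Sm r y / 2)"
      by (simp add: field_simps)
    have i1: "(\<Sum>i=1..r. y i * y' i) \<in> \<int>" using Z Z' by (auto simp: Zvec_def)
    have "Sm r y' \<in> \<int>" "y' 0 \<in> \<int>" using Z' by (auto simp: Zvec_def intro: Sm_Ints)
    then have i2: "(y 0 / 2) * Sm r y' + y' 0 * (Sm r y / 2) \<in> \<int>" using a s by (intro Ints_add Ints_mult)
    show "betaQ 2 (Qform 0 1 r) y y' \<in> \<int>"
      unfolding betaQ_eq e using Ints_diff[OF i1 i2] .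
  qed
qed

lemma XQn_char: assumes "r \<ge> 1"
  shows "XQn r 2 (Qform 0 1 r) =
    {x. (\<forall>i>r. x i = 0) \<and> (\<forall>i. 2 * x i \<in> \<int>) \<and> (\<forall>i\<in>{1..r}. x i - x 1 \<in> \<int>)}"
proof (intro set_eqI iffI)
  fix x assume x: "x \<in> XQn r 2 (Qform 0 1 r)"
  have "x i - x 1 \<in> \<int>" if i: "i \<in> {1..r}" for i
  proof -
    have "ev i - ev 1 \<in> YQn r 2 (Qform 0 1 r)" using i assms
      by (auto simp: YQn_char[OF assms] intro!: Zvec_diff ev_Zvec)
    then have "(\<Sum>l\<le>r. x l * (ev i - ev 1) l) \<in> \<int>" using x by (auto simp: XQn_def)
    moreover have "(\<Sum>l\<le>r. x l * (ev i - ev 1) l) = x i - x 1" using i assms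
      by (simp add: right_diff_distrib sum_subtractf)
    ultimately show ?thesis by simp
  qed
  then show "x \<in> {x. (\<forall>i>r. x i = 0) \<and> (\<forall>i. 2 * x i \<in> \<int>) \<and> (\<forall>i\<in>{1..r}. x i - x 1 \<in> \<int>)}"
    using x by (auto simp: XQn_def)
next
  fix x :: vec assume "x \<in> {x. (\<forall>i>r. x i = 0) \<and> (\<forall>i. 2 * x i \<in> \<int>) \<and> (\<forall>i\<in>{1..r}. x i - x 1 \<in> \<int>)}"
  then have s: "\<forall>i>r. x i = 0" and h: "\<And>i. 2 * x i \<in> \<int>" and d: "\<And>i. i\<in>{1..r} \<Longrightarrow> x i - x 1 \<in> \<int>"
    by auto
  show "x \<in> XQn r 2 (Qform 0 1 r)" unfolding XQn_def
  proof (intro CollectI conjI allI ballI impI)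
    fix i show "of_nat 2 * x i \<in> \<int>" using h by simp
  next
    fix i :: nat assume "i > r" then show "x i = 0" using s by auto
  next
    fix y assume "y \<in> YQn r 2 (Qform 0 1 r)"
    then have Z: "y \<in> Zvec r" and a: "y 0 / 2 \<in> \<int>" and b: "Sm r y / 2 \<in> \<int>"
      by (auto simp: YQn_char[OF assms])
    have yi: "y i \<in> \<int>" for i using Z by (auto simp: Zvec_def)
    have e: "(\<Sum>i\<le>r. x i * y i) = (2 * x 0) * (y 0 / 2) + (\<Sum>i=1..r. (x i - x 1) * y i) + (2 * x 1) * (Sm r y / 2)"
      by (simp add: sum_split0 left_diff_distrib sum_subtractf Sm_def sum_distrib_left[symmetric])
    have "(\<Sum>i=1..r. (x i - x 1) * y i) \<in> \<int>" using d yi by (intro Ints_sum Ints_mult) auto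
    then show "(\<Sum>i\<le>r. x i * y i) \<in> \<int>" unfolding e
      using Ints_mult[OF h a] Ints_mult[OF h b] by (intro Ints_add)
  qed
qed

lemma sq1: "i \<noteq> j \<Longrightarrow> ((if l = i then 1 else 0) - (if l = j then 1 else 0))^2 = (if l = i then 1 else 0) + (if l = j then (1::rat) else 0)" by auto
lemma sq2: "i \<noteq> j \<Longrightarrow> ((if l = i then 1 else 0) + (if l = j then 1 else 0))^2 = (if l = i then 1 else 0) + (if l = j then (1::rat) else 0)" by auto
lemma sq3: "((if l = i then 1 else 0))^2 = (if l = i then (1::rat) else 0)" by auto

abbreviation "np r b \<equiv> n_phi 2 (Qform 0 1 r) b"

definition good :: "nat \<Rightarrow> vec \<times> vec \<Rightarrow> bool" where
  "good r ab \<longleftrightarrow> (case ab of (a, b) \<Rightarrow> b \<in> Zvec r \<and> b 0 = 0 \<and> np r b > 0 \<and>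
      a = smul (of_nat (np r b)) (Lr r b))"

lemma Qform_neg: "Qform k v r (- y) = Qform k v r y"
  by (simp add: Qform_def sum_negf)

lemma good_neg: "good r (a, b) \<Longrightarrow> good r (- a, - b)"
  by (auto simp: good_def n_phi_def Qform_neg Zvec_def Lr_def smul_def fun_eq_iff)

lemma good_pos: assumes "(a, b) \<in> GSp_pos_roots r" shows "good r (a, b)"
  using assms unfolding GSp_pos_roots_def
proof (elim UnE CollectE exE conjE)
  fix i j assume e: "(a, b) = (ev i - ev j, ev i - ev j)" and ij: "1 \<le> i" "i < j" "j \<le> r"
  have "(\<Sum>l=1..r. ((if l = i then 1 else 0) - (if l = j then 1 else 0))^2) = (2::rat)"
    using ij by (simp add: sq1 sum.distrib)
  then have Q: "Qform 0 1 r b = 2" using e ij by (simp add: Qform01)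
  from e have ab: "a = ev i - ev j" "b = ev i - ev j" by auto
  show "good r (a, b)" using ij Q unfolding good_def ab
    by (auto simp: n_phi_def Zvec_def Lr_def smul_def fun_eq_iff)
next
  fix i j assume e: "(a, b) = (ev i + ev j - ev 0, ev i + ev j)" and ij: "1 \<le> i" "i < j" "j \<le> r"
  have "(\<Sum>l=1..r. ((if l = i then 1 else 0) + (if l = j then 1 else 0))^2) = (2::rat)"
    using ij by (simp add: sq2 sum.distrib)
  then have Q: "Qform 0 1 r b = 2" using e ij by (simp add: Qform01)
  from e have ab: "a = ev i + ev j - ev 0" "b = ev i + ev j" by auto
  show "good r (a, b)" using ij Q unfolding good_def ab
    by (auto simp: n_phi_def Zvec_def Lr_def smul_def fun_eq_iff)
next
  fix i assume e: "(a, b) = (smul 2 (ev i) - ev 0, ev i)" and ij: "1 \<le> i" "i \<le> r"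
  have "(\<Sum>l=1..r. ((if l = i then 1 else 0))^2) = (1::rat)"
    using ij by (simp add: sq3)
  then have Q: "Qform 0 1 r b = 1" using e ij by (simp add: Qform01)
  from e have ab: "a = smul 2 (ev i) - ev 0" "b = ev i" by auto
  show "good r (a, b)" using ij Q unfolding good_def ab
    by (auto simp: n_phi_def Zvec_def Lr_def smul_def fun_eq_iff)
qed

lemma good_roots: "(a, b) \<in> GSp_roots r \<Longrightarrow> good r (a, b)"
  unfolding GSp_roots_def using good_pos good_neg by fastforce

lemma smul_inv: "c \<noteq> 0 \<Longrightarrow> smul (1 / c) (smul c x) = x"
  by (simp add: smul_def fun_eq_iff)

lemma roots_match:
  assumes fs: "\<And>c y. f (smul c y) = smul c (f y)"
    and fL: "\<And>a b. (a,b) \<in> GSp_roots r \<Longrightarrow> f b = Lr r b"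
    and PY: "\<And>a b. (a,b) \<in> GSp_roots r \<Longrightarrow> P b \<in> Y'"
    and gP: "\<And>a b. (a,b) \<in> GSp_roots r \<Longrightarrow> g (P b) = Lr r b"
    and inj: "inj_on g Y'"
  shows "{(a, P b) | a b. (a,b) \<in> GSp_roots r} =
     {(f A, b') | A B b'. (A,B) \<in> rd_R (cover_dual r 2 (Qform 0 1 r)) \<and> b' \<in> Y' \<and> g b' = B}"
proof (intro set_eqI iffI)
  fix z assume "z \<in> {(a, P b) | a b. (a,b) \<in> GSp_roots r}"
  then obtain a b where z: "z = (a, P b)" and R: "(a,b) \<in> GSp_roots r" by auto
  from good_roots[OF R] have n: "np r b > 0" and a: "a = smul (of_nat (np r b)) (Lr r b)"
    by (auto simp: good_def)
  have "(smul (of_nat (np r b)) b, smul (1 / of_nat (np r b)) a) \<in> rd_R (cover_dual r 2 (Qform 0 1 r))"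
    using R by (auto simp: cover_dual_def)
  moreover have "f (smul (of_nat (np r b)) b) = a" using fs fL[OF R] a by simp
  moreover have "g (P b) = smul (1 / of_nat (np r b)) a" using gP[OF R] a n smul_inv by simp
  ultimately show "z \<in> {(f A, b') | A B b'. (A,B) \<in> rd_R (cover_dual r 2 (Qform 0 1 r)) \<and> b' \<in> Y' \<and> g b' = B}"
    using z PY[OF R] by blast
next
  fix z assume "z \<in> {(f A, b') | A B b'. (A,B) \<in> rd_R (cover_dual r 2 (Qform 0 1 r)) \<and> b' \<in> Y' \<and> g b' = B}"
  then obtain a b b' where z: "z = (f (smul (of_nat (np r b)) b), b')" and R: "(a,b) \<in> GSp_roots r"
    and b': "b' \<in> Y'" "g b' = smul (1 / of_nat (np r b)) a"
    by (auto simp: cover_dual_def)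
  from good_roots[OF R] have n: "np r b > 0" and a: "a = smul (of_nat (np r b)) (Lr r b)"
    by (auto simp: good_def)
  have "g b' = g (P b)" using b' gP[OF R] a n smul_inv by simp
  then have "b' = P b" using inj b' PY[OF R] by (auto simp: inj_on_def)
  moreover have "f (smul (of_nat (np r b)) b) = a" using fs fL[OF R] a by simp
  ultimately show "z \<in> {(a, P b) | a b. (a,b) \<in> GSp_roots r}" using z R by blast
qed

lemma Sm_lam: "Sm r (\<lambda>i. c * y i) = c * Sm r y"
  by (simp add: Sm_def sum_distrib_left)

lemma Sm_mid: "Sm r (\<lambda>l. if l = 0 then A else if l \<le> r then F l else B l) = (\<Sum>l=1..r. F l)"
  unfolding Sm_def by (intro sum.cong) auto

lemma Sm_const: "(\<Sum>l=1..r. y l - c) = Sm r y - of_nat r * c"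
  by (simp add: Sm_def sum_subtractf)

definition fo :: "nat \<Rightarrow> vec \<Rightarrow> vec" where
  "fo r y = (\<lambda>l. if l = 0 then (of_nat r - 1) / 4 * y 0 - Sm r y / 2
               else if l \<le> r then y l - y 0 / 2 else 0)"
definition ho :: "nat \<Rightarrow> vec \<Rightarrow> vec" where
  "ho r x = (\<lambda>l. if l = 0 then - 2 * (2 * x 0 + Sm r x)
               else if l \<le> r then x l - (2 * x 0 + Sm r x) else 0)"

lemma Sm_fo: "Sm r (fo r y) = Sm r y - of_nat r * (y 0 / 2)"
  unfolding fo_def Sm_mid Sm_const ..
lemma Sm_ho: "Sm r (ho r x) = Sm r x - of_nat r * (2 * x 0 + Sm r x)"
  unfolding ho_def Sm_mid Sm_const ..

lemma fo_add: "fo r (x + y) = fo r x + fo r y"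
  by (simp add: fo_def fun_eq_iff field_simps)
lemma fo_smul: "fo r (smul c y) = smul c (fo r y)"
  by (simp add: fo_def smul_def fun_eq_iff field_simps Sm_lam)
lemma fo_L: "b \<in> Zvec r \<Longrightarrow> b 0 = 0 \<Longrightarrow> fo r b = Lr r b"
  by (auto simp: fo_def Lr_def Zvec_def fun_eq_iff)

lemma ho_fo: "\<forall>i>r. y i = 0 \<Longrightarrow> ho r (fo r y) = y"
  unfolding fun_eq_iff
proof (intro allI)
  fix l assume s: "\<forall>i>r. y i = 0"
  have t: "2 * fo r y 0 + Sm r (fo r y) = - (y 0 / 2)"
    unfolding Sm_fo by (simp add: fo_def field_simps)
  show "ho r (fo r y) l = y l"
    using s unfolding ho_def t by (simp add: fo_def)
qed

lemma fo_ho: "\<forall>i>r. x i = 0 \<Longrightarrow> fo r (ho r x) = x"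
  unfolding fun_eq_iff
proof (intro allI)
  fix l assume s: "\<forall>i>r. x i = 0"
  have h0: "ho r x 0 = - 2 * (2 * x 0 + Sm r x)" by (simp add: ho_def)
  show "fo r (ho r x) l = x l"
    using s unfolding fo_def Sm_ho h0 by (auto simp: ho_def field_simps)
qed

lemma Zvec_I: "(\<And>i. x i \<in> \<int>) \<Longrightarrow> (\<And>i. i > r \<Longrightarrow> x i = 0) \<Longrightarrow> x \<in> Zvec r"
  by (auto simp: Zvec_def)

lemma of_int_in_Ints: "(of_nat k :: rat) \<in> \<int>" by simp

lemma fo0: "r = 2*k+1 \<Longrightarrow> fo r y 0 = of_nat k * (y 0 / 2) - Sm r y / 2"
  by (simp add: fo_def field_simps)
lemma fo0': "r = 2*k+1 \<Longrightarrow> 2 * fo r y 0 = of_nat k * y 0 - Sm r y"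
  by (simp add: fo_def field_simps)
lemma foi: "1 \<le> i \<Longrightarrow> i \<le> r \<Longrightarrow> fo r y i = y i - y 0 / 2"
  by (simp add: fo_def)
lemma foi': "1 \<le> i \<Longrightarrow> i \<le> r \<Longrightarrow> 2 * fo r y i = 2 * y i - y 0"
  by (simp add: fo_def)
lemma fo_out: "r < i \<Longrightarrow> fo r y i = 0"
  by (simp add: fo_def)
lemma ho_out: "r < i \<Longrightarrow> ho r y i = 0"
  by (simp add: ho_def)

lemma I1: assumes r: "r = 2*k+1" and y: "y \<in> Zvec r" "y 0 / 2 \<in> \<int>" "Sm r y / 2 \<in> \<int>"
  shows "fo r y \<in> Zvec r"
proof (rule Zvec_I)
  fix i
  have yi: "y j \<in> \<int>" for j using y by (auto simp: Zvec_def)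
  consider "i = 0" | "1 \<le> i \<and> i \<le> r" | "r < i" by linarith
  then show "fo r y i \<in> \<int>"
  proof cases
    case 1 show ?thesis unfolding 1 fo0[OF r]
      by (rule Ints_diff Ints_mult Ints_of_nat y yi)+
  next
    case 2 show ?thesis unfolding foi[OF conjunct1[OF 2] conjunct2[OF 2]]
      by (rule Ints_diff Ints_mult Ints_of_nat y yi)+
  qed (simp add: fo_out)
next
  fix i assume "r < i" then show "fo r y i = 0" by (simp add: fo_def)
qed

lemma I2: assumes r: "r = 2*k+1" "r \<ge> 1" and x: "x \<in> Zvec r"
  shows "ho r x \<in> YQn r 2 (Qform 0 1 r)"
proof -
  have xi: "x j \<in> \<int>" for j using x by (auto simp: Zvec_def)
  have S: "Sm r x \<in> \<int>" using xi by (rule Sm_Ints)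
  have Z: "ho r x \<in> Zvec r"
  proof (rule Zvec_I)
    fix i show "ho r x i \<in> \<int>" unfolding ho_def
      by (simp only: if_distrib[of "\<lambda>t. t \<in> \<int>"] split: if_split)
        (intro conjI impI; (rule Ints_diff Ints_add Ints_mult Ints_minus Ints_numeral Ints_0 S xi)+)
  qed (simp add: ho_out)
  have a: "ho r x 0 / 2 = - (2 * x 0 + Sm r x)" by (simp add: ho_def)
  have b: "Sm r (ho r x) / 2 = - (of_nat k * Sm r x) - of_nat r * x 0"
    unfolding Sm_ho using r by (simp add: field_simps)
  have "ho r x 0 / 2 \<in> \<int>" unfolding a by (rule Ints_diff Ints_add Ints_mult Ints_minus Ints_numeral Ints_of_nat S xi)+
  moreover have "Sm r (ho r x) / 2 \<in> \<int>" unfolding b by (rule Ints_diff Ints_add Ints_mult Ints_minus Ints_numeral Ints_of_nat S xi)+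
  ultimately show ?thesis unfolding YQn_char[OF r(2)] using Z by auto
qed

lemma I3: assumes r: "r = 2*k+1" "r \<ge> 1" and y: "y \<in> Zvec r"
  shows "fo r y \<in> XQn r 2 (Qform 0 1 r)"
proof -
  have yi: "y j \<in> \<int>" for j using y by (auto simp: Zvec_def)
  have S: "Sm r y \<in> \<int>" using yi by (rule Sm_Ints)
  have "2 * fo r y i \<in> \<int>" for i
  proof -
    consider "i = 0" | "1 \<le> i \<and> i \<le> r" | "r < i" by linarith
    then show ?thesis
    proof cases
      case 1 show ?thesis unfolding 1 fo0'[OF r(1)]
        by (rule Ints_diff Ints_mult Ints_of_nat S yi)+
    next
      case 2 show ?thesis unfolding foi'[OF conjunct1[OF 2] conjunct2[OF 2]]
        by (rule Ints_diff Ints_mult Ints_numeral yi)+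
    qed (simp add: fo_out)
  qed
  moreover have "fo r y i - fo r y 1 \<in> \<int>" if "i \<in> {1..r}" for i
    using that r yi by (auto simp: fo_def intro!: Ints_diff)
  ultimately show ?thesis unfolding XQn_char[OF r(2)] by (auto simp: fo_out)
qed

lemma I4: assumes r: "r = 2*k+1" "r \<ge> 1" and x: "x \<in> XQn r 2 (Qform 0 1 r)"
  shows "ho r x \<in> Zvec r"
proof -
  from x have s: "\<forall>i>r. x i = 0" and h: "\<And>i. 2 * x i \<in> \<int>" and d: "\<And>i. i\<in>{1..r} \<Longrightarrow> x i - x 1 \<in> \<int>"
    unfolding XQn_char[OF r(2)] by auto
  define D where "D = (\<Sum>l=1..r. x l - x 1)"
  have D: "D \<in> \<int>" unfolding D_def using d by auto
  have SD: "Sm r x = D + of_nat r * x 1" unfolding D_def Sm_const by simp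
  show ?thesis
  proof (rule Zvec_I)
    fix i
    show "ho r x i \<in> \<int>"
    proof (cases "i = 0")
      case True
      have e: "ho r x i = - 2 * (2 * x 0) - 2 * D - of_nat r * (2 * x 1)"
        using True unfolding ho_def SD by (simp add: field_simps)
      show ?thesis unfolding e by (rule Ints_diff Ints_mult Ints_minus Ints_numeral Ints_of_nat h D)+
    next
      case False
      show ?thesis
      proof (cases "i \<le> r")
        case True
        have di: "x i - x 1 \<in> \<int>" using d True False by auto
        have e: "ho r x i = (x i - x 1) - 2 * x 0 - D - of_nat k * (2 * x 1)"
          using True False r unfolding ho_def SD by (simp add: field_simps)
        show ?thesis unfolding e by (rule Ints_diff Ints_mult Ints_minus Ints_numeral Ints_of_nat h D di)+
      next
        case False then show ?thesis using \<open>i \<noteq> 0\<close> by (simp add: ho_def)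
      qed
    qed
  next
    fix i assume "r < i" then show "ho r x i = 0" by (simp add: ho_def)
  qed
qed

lemma sum_lin1: "(\<Sum>l=1..r. (x l - c) * y l) = (\<Sum>l=1..r. x l * y l) - c * Sm r y"
  by (simp add: Sm_def left_diff_distrib sum_subtractf sum_distrib_left)
lemma sum_lin2: "(\<Sum>l=1..r. x l * (y l - c)) = (\<Sum>l=1..r. x l * y l) - c * Sm r x"
  by (simp add: Sm_def right_diff_distrib sum_subtractf sum_distrib_left mult.commute)

lemma pair_fo: "(\<Sum>i<Suc r. fo r x i * y i) = (\<Sum>i<Suc r. x i * fo r y i)"
proof -
  have a: "(\<Sum>l=1..r. fo r x l * y l) = (\<Sum>l=1..r. (x l - x 0 / 2) * y l)"
    by (intro sum.cong) (auto simp: fo_def)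
  have b: "(\<Sum>l=1..r. x l * fo r y l) = (\<Sum>l=1..r. x l * (y l - y 0 / 2))"
    by (intro sum.cong) (auto simp: fo_def)
  show ?thesis unfolding lessThan_Suc_atMost sum_split0 a b sum_lin1 sum_lin2
    by (simp add: fo_def field_simps)
qed

lemma odd_case: assumes r: "r = 2*k+1" "r \<ge> 1"
  shows "rd_iso (cover_dual r 2 (Qform 0 1 r)) (GSp_datum r)"
  unfolding rd_iso_def
proof (intro exI[of _ "fo r"] exI[of _ "fo r"] conjI ballI)
  show "bij_betw (fo r) (rd_X (cover_dual r 2 (Qform 0 1 r))) (rd_X (GSp_datum r))"
    unfolding cover_dual_def GSp_datum_def rdatum.simps
  proof (rule bij_betw_byWitness[where f'="ho r"])
    show "\<forall>a\<in>YQn r 2 (Qform 0 1 r). ho r (fo r a) = a"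
      by (auto simp: YQn_char[OF r(2)] Zvec_def ho_fo)
    show "\<forall>a'\<in>Zvec r. fo r (ho r a') = a'"
      by (auto simp: Zvec_def fo_ho)
    show "fo r ` YQn r 2 (Qform 0 1 r) \<subseteq> Zvec r"
      using I1[OF r(1)] by (auto simp: YQn_char[OF r(2)])
    show "ho r ` Zvec r \<subseteq> YQn r 2 (Qform 0 1 r)"
      using I2[OF r] by auto
  qed
  show "bij_betw (fo r) (rd_Y (GSp_datum r)) (rd_Y (cover_dual r 2 (Qform 0 1 r)))"
    unfolding cover_dual_def GSp_datum_def rdatum.simps
  proof (rule bij_betw_byWitness[where f'="ho r"])
    show "\<forall>a\<in>Zvec r. ho r (fo r a) = a"
      by (auto simp: Zvec_def ho_fo)
    show "\<forall>a'\<in>XQn r 2 (Qform 0 1 r). fo r (ho r a') = a'"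
      by (auto simp: XQn_def fo_ho)
    show "fo r ` Zvec r \<subseteq> XQn r 2 (Qform 0 1 r)"
      using I3[OF r] by auto
    show "ho r ` XQn r 2 (Qform 0 1 r) \<subseteq> Zvec r"
      using I4[OF r] by auto
  qed
next
  fix x x' show "fo r (x + x') = fo r x + fo r x'" by (rule fo_add)
next
  fix y y' show "fo r (y + y') = fo r y + fo r y'" by (rule fo_add)
next
  fix x y show "rd_pair (GSp_datum r) (fo r x) y = rd_pair (cover_dual r 2 (Qform 0 1 r)) x (fo r y)"
    unfolding rd_pair_def GSp_datum_def cover_dual_def rdatum.simps Suc_eq_plus1[symmetric]
    by (rule pair_fo)
next
  have "rd_R (GSp_datum r) = {(a, id b) | a b. (a,b) \<in> GSp_roots r}"
    by (auto simp: GSp_datum_def)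
  also have "\<dots> = {(fo r A, b') | A B b'. (A,B) \<in> rd_R (cover_dual r 2 (Qform 0 1 r)) \<and> b' \<in> Zvec r \<and> fo r b' = B}"
  proof (rule roots_match)
    fix a b assume R: "(a, b) \<in> GSp_roots r"
    then have "b \<in> Zvec r" "b 0 = 0" using good_roots[OF R] by (auto simp: good_def)
    then show "fo r b = Lr r b" "id b \<in> Zvec r" "fo r (id b) = Lr r b" by (auto simp: fo_L)
  next
    show "inj_on (fo r) (Zvec r)"
      by (rule inj_on_inverseI[where g="ho r"]) (auto simp: Zvec_def ho_fo)
  qed (auto simp: fo_smul)
  finally show "rd_R (GSp_datum r) = {(fo r a, b') | a b b'. (a, b) \<in> rd_R (cover_dual r 2 (Qform 0 1 r)) \<and> b' \<in> rd_Y (GSp_datum r) \<and> fo r b' = b}"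
    by (simp add: GSp_datum_def)
qed

definition fe :: "nat \<Rightarrow> vec \<Rightarrow> vec" where
  "fe r y = (\<lambda>l. if l = 0 then of_nat r / 4 * y 0 - Sm r y / 2 else if l \<le> r then y l - y 0 / 2
     else if l = r + 1 then y 0 / 2 else 0)"
definition he :: "nat \<Rightarrow> vec \<Rightarrow> vec" where
  "he r x = (\<lambda>l. if l = 0 then 2 * x (r + 1) else if l \<le> r then x l + x (r + 1) else 0)"
definition ge :: "nat \<Rightarrow> vec \<Rightarrow> vec" where
  "ge r w = (\<lambda>l. if l = 0 then of_nat r / 4 * w 0 - Sm r w / 2 + w (r + 1) / 2
     else if l \<le> r then w l - w 0 / 2 else 0)"
definition ke :: "nat \<Rightarrow> vec \<Rightarrow> vec" where
  "ke r x = (\<lambda>l. if l = 0 then 0 else if l \<le> r then x l else if l = r + 1 then 2 * x 0 + Sm r x else 0)"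

lemma Sm_constp: "(\<Sum>l=1..r. y l + c) = Sm r y + of_nat r * c"
  by (simp add: Sm_def sum.distrib)

lemma Sm_fe: "Sm r (fe r y) = Sm r y - of_nat r * (y 0 / 2)"
  unfolding fe_def Sm_mid Sm_const ..
lemma Sm_he: "Sm r (he r x) = Sm r x + of_nat r * x (r + 1)"
  unfolding he_def Sm_mid Sm_constp ..
lemma Sm_ge: "Sm r (ge r w) = Sm r w - of_nat r * (w 0 / 2)"
  unfolding ge_def Sm_mid Sm_const ..
lemma Sm_ke: "Sm r (ke r x) = Sm r x"
  unfolding ke_def Sm_mid Sm_def ..

lemma fe_add: "fe r (x + y) = fe r x + fe r y"
  by (simp add: fe_def fun_eq_iff field_simps)
lemma ge_add: "ge r (x + y) = ge r x + ge r y"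
  by (simp add: ge_def fun_eq_iff field_simps)
lemma fe_smul: "fe r (smul c y) = smul c (fe r y)"
  by (simp add: fe_def smul_def fun_eq_iff field_simps Sm_lam)
lemma fe_L: "b \<in> Zvec r \<Longrightarrow> b 0 = 0 \<Longrightarrow> fe r b = Lr r b"
  by (auto simp: fe_def Lr_def Zvec_def fun_eq_iff)
lemma ge_L: "b \<in> Zvec r \<Longrightarrow> b 0 = 0 \<Longrightarrow> ge r b = Lr r b"
  by (auto simp: ge_def Lr_def Zvec_def fun_eq_iff)

lemma he_fe: "\<forall>i>r. y i = 0 \<Longrightarrow> he r (fe r y) = y"
  by (auto simp: he_def fe_def fun_eq_iff)

lemma fe_he: assumes "2 * z 0 + Sm r z = 0" "\<forall>i>r+1. z i = 0" shows "fe r (he r z) = z"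
  unfolding fun_eq_iff
proof
  fix l
  have h0: "he r z 0 = 2 * z (r + 1)" by (simp add: he_def)
  have "z 0 = - Sm r z / 2" using assms(1) by (simp add: field_simps)
  then show "fe r (he r z) l = z l"
    using assms(2) unfolding fe_def Sm_he h0 by (auto simp: he_def field_simps)
qed

lemma ke_ge: assumes "w 0 = 0" "\<forall>i>r+1. w i = 0" shows "ke r (ge r w) = w"
  unfolding fun_eq_iff
proof
  fix l
  have g0: "ge r w 0 = - Sm r w / 2 + w (r + 1) / 2" using assms by (simp add: ge_def)
  show "ke r (ge r w) l = w l"
    using assms unfolding ke_def Sm_ge g0 by (auto simp: ge_def field_simps)
qed

lemma ge_ke: assumes "\<forall>i>r. x i = 0" shows "ge r (ke r x) = x"
  unfolding fun_eq_iff
proof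
  fix l
  have k: "ke r x 0 = 0" "ke r x (r + 1) = 2 * x 0 + Sm r x" by (auto simp: ke_def)
  show "ge r (ke r x) l = x l"
    using assms unfolding ge_def Sm_ke k by (auto simp: ke_def field_simps)
qed

lemma pair_fe: "(\<Sum>i<Suc (Suc r). fe r x i * w i) = (\<Sum>i<Suc r. x i * ge r w i)"
proof -
  have a: "(\<Sum>l=1..r. fe r x l * w l) = (\<Sum>l=1..r. (x l - x 0 / 2) * w l)"
    by (intro sum.cong) (auto simp: fe_def)
  have b: "(\<Sum>l=1..r. x l * ge r w l) = (\<Sum>l=1..r. x l * (w l - w 0 / 2))"
    by (intro sum.cong) (auto simp: ge_def)
  have c: "fe r x (Suc r) = x 0 / 2" by (simp add: fe_def)
  have L: "(\<Sum>i<Suc (Suc r). fe r x i * w i) = fe r x 0 * w 0 + (\<Sum>l=1..r. fe r x l * w l) + fe r x (Suc r) * w (Suc r)"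
    unfolding sum.lessThan_Suc[of _ "Suc r"] unfolding lessThan_Suc_atMost sum_split0 ..
  have R: "(\<Sum>i<Suc r. x i * ge r w i) = x 0 * ge r w 0 + (\<Sum>l=1..r. x l * ge r w l)"
    unfolding lessThan_Suc_atMost sum_split0 ..
  show ?thesis unfolding L R a b c sum_lin1 sum_lin2
    by (simp add: fe_def ge_def field_simps)
qed

lemma zc_sum: "(\<Sum>i\<le>r. x i * zc r i) = 2 * x 0 + Sm r x"
proof -
  have "(\<Sum>i=1..r. x i * zc r i) = Sm r x" unfolding Sm_def by (intro sum.cong) (auto simp: zc_def)
  then show ?thesis unfolding sum_split0 by (simp add: zc_def)
qed

lemma Sm_upd: "Sm r (\<lambda>i. if i = r + 1 then c else z i) = Sm r z"
  unfolding Sm_def by (intro sum.cong) auto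

lemma XE_char: "rd_X (times_Gm (PGSp_datum r)) =
   {z. (\<forall>i. z i \<in> \<int>) \<and> (\<forall>i>r+1. z i = 0) \<and> 2 * z 0 + Sm r z = 0}"
proof (intro set_eqI iffI)
  fix z assume "z \<in> rd_X (times_Gm (PGSp_datum r))"
  then obtain x c where z: "z = x + smul (of_int c) (ev (r+1))" and x: "x \<in> Zvec r" "2 * x 0 + Sm r x = 0"
    by (auto simp: times_Gm_def PGSp_datum_def zc_sum)
  have zi: "z i = x i + (if i = r + 1 then of_int c else 0)" for i by (simp add: z smul_def)
  have "Sm r z = Sm r x" unfolding Sm_def zi by (intro sum.cong) auto
  then show "z \<in> {z. (\<forall>i. z i \<in> \<int>) \<and> (\<forall>i>r+1. z i = 0) \<and> 2 * z 0 + Sm r z = 0}"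
    using x by (auto simp: zi Zvec_def)
next
  fix z :: vec assume "z \<in> {z. (\<forall>i. z i \<in> \<int>) \<and> (\<forall>i>r+1. z i = 0) \<and> 2 * z 0 + Sm r z = 0}"
  then have zi: "\<And>i. z i \<in> \<int>" and s: "\<forall>i>r+1. z i = 0" and e: "2 * z 0 + Sm r z = 0" by auto
  from zi[of "r+1"] obtain c where c: "z (r+1) = of_int c" by (auto elim: Ints_cases)
  define x where "x = (\<lambda>i. if i = r + 1 then 0 else z i)"
  have c': "z (Suc r) = of_int c" using c by simp
  have "z = x + smul (of_int c) (ev (r+1))" by (auto simp: x_def smul_def c' fun_eq_iff)
  moreover have "x \<in> Zvec r" using zi s by (auto simp: x_def Zvec_def)
  moreover have "2 * x 0 + Sm r x = 0" using e unfolding x_def Sm_upd by simp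
  ultimately show "z \<in> rd_X (times_Gm (PGSp_datum r))"
    by (auto simp: times_Gm_def PGSp_datum_def zc_sum)
qed

lemma proj_c_apply: "proj_c r v l = v l - v 0 / 2 * zc r l"
  by (simp add: proj_c_def smul_def)

lemma YE_char: assumes "r \<ge> 1" shows "rd_Y (times_Gm (PGSp_datum r)) =
   {w. w 0 = 0 \<and> (\<forall>i>r+1. w i = 0) \<and> w (r+1) \<in> \<int> \<and> (\<forall>i\<in>{1..r}. 2 * w i \<in> \<int> \<and> w i - w 1 \<in> \<int>)}"
proof (intro set_eqI iffI)
  fix w assume "w \<in> rd_Y (times_Gm (PGSp_datum r))"
  then obtain v c where w: "w = proj_c r v + smul (of_int c) (ev (r+1))" and v: "v \<in> Zvec r"
    by (auto simp: times_Gm_def PGSp_datum_def)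
  have vi: "v i \<in> \<int>" for i using v by (auto simp: Zvec_def)
  have wi: "w i = v i - v 0 / 2 * zc r i + (if i = r + 1 then of_int c else 0)" for i
    by (simp add: w smul_def proj_c_apply)
  have "2 * w i \<in> \<int> \<and> w i - w 1 \<in> \<int>" if "i \<in> {1..r}" for i
  proof -
    have "2 * w i = 2 * v i - v 0" "w i - w 1 = v i - v 1" using that assms by (auto simp: wi zc_def)
    then show ?thesis using vi by auto
  qed
  then show "w \<in> {w. w 0 = 0 \<and> (\<forall>i>r+1. w i = 0) \<and> w (r+1) \<in> \<int> \<and> (\<forall>i\<in>{1..r}. 2 * w i \<in> \<int> \<and> w i - w 1 \<in> \<int>)}"
    using v by (auto simp: wi zc_def Zvec_def)
next
  fix w :: vec assume "w \<in> {w. w 0 = 0 \<and> (\<forall>i>r+1. w i = 0) \<and> w (r+1) \<in> \<int> \<and> (\<forall>i\<in>{1..r}. 2 * w i \<in> \<int> \<and> w i - w 1 \<in> \<int>)}"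
  then have w0: "w 0 = 0" and s: "\<forall>i>r+1. w i = 0" and wr: "w (r+1) \<in> \<int>"
    and h: "\<And>i. i \<in> {1..r} \<Longrightarrow> 2 * w i \<in> \<int> \<and> w i - w 1 \<in> \<int>" by auto
  from wr obtain c where c: "w (r+1) = of_int c" by (auto elim: Ints_cases)
  define v where "v = (\<lambda>l. if l = 0 then - 2 * w 1 else if l \<le> r then w l - w 1 else 0)"
  have "2 * w 1 \<in> \<int>" using h[of 1] assms by auto
  then have "v \<in> Zvec r" using h by (auto simp: v_def Zvec_def)
  moreover have "w = proj_c r v + smul (of_int c) (ev (r+1))"
    using w0 s c by (auto simp: fun_eq_iff proj_c_apply v_def zc_def smul_def)
  ultimately show "w \<in> rd_Y (times_Gm (PGSp_datum r))"
    by (auto simp: times_Gm_def PGSp_datum_def)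
qed

lemma SmD: "Sm r x = (\<Sum>l=1..r. x l - x 1) + of_nat r * x 1"
  unfolding Sm_const by simp

lemma E1: assumes r: "r = 2*k" "r \<ge> 1" and y: "y \<in> YQn r 2 (Qform 0 1 r)"
  shows "fe r y \<in> rd_X (times_Gm (PGSp_datum r))"
proof -
  from y have Z: "y \<in> Zvec r" and a: "y 0 / 2 \<in> \<int>" and b: "Sm r y / 2 \<in> \<int>"
    by (auto simp: YQn_char[OF r(2)])
  have yi: "y j \<in> \<int>" for j using Z by (auto simp: Zvec_def)
  have "fe r y i \<in> \<int>" for i
  proof -
    consider "i = 0" | "1 \<le> i \<and> i \<le> r" | "i = r + 1" | "r + 1 < i" by linarith
    then show ?thesis
    proof cases
      case 1
      have e: "fe r y i = of_nat k * (y 0 / 2) - Sm r y / 2" using 1 r by (simp add: fe_def field_simps)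
      show ?thesis unfolding e by (rule Ints_diff Ints_mult Ints_of_nat a b)+
    next
      case 2
      have e: "fe r y i = y i - y 0 / 2" using 2 by (simp add: fe_def)
      show ?thesis unfolding e by (rule Ints_diff yi a)+
    next
      case 3 then show ?thesis using a by (simp add: fe_def)
    next
      case 4 then show ?thesis by (simp add: fe_def)
    qed
  qed
  moreover have "2 * fe r y 0 + Sm r (fe r y) = 0" unfolding Sm_fe by (simp add: fe_def field_simps)
  ultimately show ?thesis unfolding XE_char by (auto simp: fe_def)
qed

lemma E2: assumes r: "r = 2*k" "r \<ge> 1" and z: "z \<in> rd_X (times_Gm (PGSp_datum r))"
  shows "he r z \<in> YQn r 2 (Qform 0 1 r)"
proof -
  from z have zi: "\<And>i. z i \<in> \<int>" and s: "\<forall>i>r+1. z i = 0" and e: "2 * z 0 + Sm r z = 0"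
    unfolding XE_char by auto
  have Z: "he r z \<in> Zvec r"
  proof (rule Zvec_I)
    fix i show "he r z i \<in> \<int>" unfolding he_def
      by (simp only: if_distrib[of "\<lambda>t. t \<in> \<int>"] split: if_split)
        (intro conjI impI; (rule Ints_add Ints_mult Ints_numeral Ints_0 zi)+)
  qed (simp add: he_def)
  have a: "he r z 0 / 2 = z (r + 1)" by (simp add: he_def)
  have b: "Sm r (he r z) / 2 = - z 0 + of_nat k * z (r + 1)"
    unfolding Sm_he using r e by (simp add: field_simps)
  have "he r z 0 / 2 \<in> \<int>" unfolding a by (rule zi)
  moreover have "Sm r (he r z) / 2 \<in> \<int>" unfolding b by (rule Ints_add Ints_mult Ints_minus Ints_of_nat zi)+
  ultimately show ?thesis unfolding YQn_char[OF r(2)] using Z by auto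
qed

lemma E3: assumes r: "r = 2*k" "r \<ge> 1" and w: "w \<in> rd_Y (times_Gm (PGSp_datum r))"
  shows "ge r w \<in> XQn r 2 (Qform 0 1 r)"
proof -
  from w have w0: "w 0 = 0" and s: "\<forall>i>r+1. w i = 0" and wr: "w (r+1) \<in> \<int>"
    and h: "\<And>i. i \<in> {1..r} \<Longrightarrow> 2 * w i \<in> \<int>" and d: "\<And>i. i \<in> {1..r} \<Longrightarrow> w i - w 1 \<in> \<int>"
    unfolding YE_char[OF r(2)] by auto
  define D where "D = (\<Sum>l=1..r. w l - w 1)"
  have D: "D \<in> \<int>" unfolding D_def using d by auto
  have h1: "2 * w 1 \<in> \<int>" using h r by auto
  have "2 * ge r w i \<in> \<int>" for i
  proof -
    consider "i = 0" | "1 \<le> i \<and> i \<le> r" | "r < i" by linarith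
    then show ?thesis
    proof cases
      case 1
      have e: "2 * ge r w i = w (r + 1) - D - of_nat k * (2 * w 1)"
        using 1 r w0 unfolding ge_def SmD[of r w] D_def[symmetric] by (simp add: field_simps)
      show ?thesis unfolding e by (rule Ints_diff Ints_mult Ints_of_nat wr D h1)+
    next
      case 2
      have e: "2 * ge r w i = 2 * w i" using 2 w0 by (simp add: ge_def)
      show ?thesis unfolding e using h 2 by auto
    next
      case 3 then show ?thesis by (simp add: ge_def)
    qed
  qed
  moreover have "ge r w i - ge r w 1 \<in> \<int>" if "i \<in> {1..r}" for i
    using that d w0 by (auto simp: ge_def)
  ultimately show ?thesis unfolding XQn_char[OF r(2)] by (auto simp: ge_def)
qed

lemma E4: assumes r: "r = 2*k" "r \<ge> 1" and x: "x \<in> XQn r 2 (Qform 0 1 r)"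
  shows "ke r x \<in> rd_Y (times_Gm (PGSp_datum r))"
proof -
  from x have s: "\<forall>i>r. x i = 0" and h: "\<And>i. 2 * x i \<in> \<int>" and d: "\<And>i. i\<in>{1..r} \<Longrightarrow> x i - x 1 \<in> \<int>"
    unfolding XQn_char[OF r(2)] by auto
  define D where "D = (\<Sum>l=1..r. x l - x 1)"
  have D: "D \<in> \<int>" unfolding D_def using d by auto
  have e: "ke r x (r + 1) = 2 * x 0 + D + of_nat k * (2 * x 1)"
    using r unfolding ke_def SmD[of r x] D_def[symmetric] by (simp add: field_simps)
  have "ke r x (r + 1) \<in> \<int>" unfolding e by (rule Ints_add Ints_mult Ints_of_nat h D)+
  moreover have "2 * ke r x i \<in> \<int> \<and> ke r x i - ke r x 1 \<in> \<int>" if "i \<in> {1..r}" for i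
    using that h d r by (auto simp: ke_def)
  ultimately show ?thesis unfolding YE_char[OF r(2)] by (auto simp: ke_def)
qed

lemma even_case: assumes r: "r = 2*k" "r \<ge> 1"
  shows "rd_iso (cover_dual r 2 (Qform 0 1 r)) (times_Gm (PGSp_datum r))"
  unfolding rd_iso_def
proof (rule exI[of _ "fe r"], rule exI[of _ "ge r"], intro conjI ballI)
  show "bij_betw (fe r) (rd_X (cover_dual r 2 (Qform 0 1 r))) (rd_X (times_Gm (PGSp_datum r)))"
    unfolding cover_dual_def rdatum.simps
  proof (rule bij_betw_byWitness[where f'="he r"])
    show "\<forall>a\<in>YQn r 2 (Qform 0 1 r). he r (fe r a) = a"
      by (auto simp: YQn_char[OF r(2)] Zvec_def he_fe)
    show "\<forall>a'\<in>rd_X (times_Gm (PGSp_datum r)). fe r (he r a') = a'"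
      by (auto simp: XE_char fe_he)
    show "fe r ` YQn r 2 (Qform 0 1 r) \<subseteq> rd_X (times_Gm (PGSp_datum r))"
      using E1[OF r] by auto
    show "he r ` rd_X (times_Gm (PGSp_datum r)) \<subseteq> YQn r 2 (Qform 0 1 r)"
      using E2[OF r] by auto
  qed
  show "bij_betw (ge r) (rd_Y (times_Gm (PGSp_datum r))) (rd_Y (cover_dual r 2 (Qform 0 1 r)))"
    unfolding cover_dual_def rdatum.simps
  proof (rule bij_betw_byWitness[where f'="ke r"])
    show "\<forall>a\<in>rd_Y (times_Gm (PGSp_datum r)). ke r (ge r a) = a"
      by (auto simp: YE_char[OF r(2)] ke_ge)
    show "\<forall>a'\<in>XQn r 2 (Qform 0 1 r). ge r (ke r a') = a'"
      by (auto simp: XQn_def ge_ke)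
    show "ge r ` rd_Y (times_Gm (PGSp_datum r)) \<subseteq> XQn r 2 (Qform 0 1 r)"
      using E3[OF r] by auto
    show "ke r ` XQn r 2 (Qform 0 1 r) \<subseteq> rd_Y (times_Gm (PGSp_datum r))"
      using E4[OF r] by auto
  qed
next
  fix x x' show "fe r (x + x') = fe r x + fe r x'" by (rule fe_add)
next
  fix y y' show "ge r (y + y') = ge r y + ge r y'" by (rule ge_add)
next
  fix x y show "rd_pair (times_Gm (PGSp_datum r)) (fe r x) y = rd_pair (cover_dual r 2 (Qform 0 1 r)) x (ge r y)"
    unfolding rd_pair_def times_Gm_def PGSp_datum_def cover_dual_def rdatum.simps Suc_eq_plus1[symmetric]
    by (rule pair_fe)
next
  have "rd_R (times_Gm (PGSp_datum r)) = {(a, proj_c r b) | a b. (a,b) \<in> GSp_roots r}"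
    by (simp add: times_Gm_def PGSp_datum_def)
  also have "\<dots> = {(fe r A, b') | A B b'. (A,B) \<in> rd_R (cover_dual r 2 (Qform 0 1 r)) \<and> b' \<in> rd_Y (times_Gm (PGSp_datum r)) \<and> ge r b' = B}"
  proof (rule roots_match)
    fix a b assume R: "(a, b) \<in> GSp_roots r"
    then have b: "b \<in> Zvec r" "b 0 = 0" using good_roots[OF R] by (auto simp: good_def)
    then have p: "proj_c r b = b" by (simp add: proj_c_def smul_def fun_eq_iff)
    show "fe r b = Lr r b" using b by (rule fe_L)
    show "ge r (proj_c r b) = Lr r b" unfolding p using b by (rule ge_L)
    have "2 * b i \<in> \<int>" "b i - b 1 \<in> \<int>" for i using b by (auto simp: Zvec_def)
    then show "proj_c r b \<in> rd_Y (times_Gm (PGSp_datum r))" unfolding p YE_char[OF r(2)]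
      using b by (auto simp: Zvec_def)
  next
    show "inj_on (ge r) (rd_Y (times_Gm (PGSp_datum r)))"
      by (rule inj_on_inverseI[where g="ke r"]) (auto simp: YE_char[OF r(2)] ke_ge)
  qed (auto simp: fe_smul)
  finally show "rd_R (times_Gm (PGSp_datum r)) = {(fe r a, b') | a b b'. (a, b) \<in> rd_R (cover_dual r 2 (Qform 0 1 r)) \<and> b' \<in> rd_Y (times_Gm (PGSp_datum r)) \<and> ge r b' = b}" .
qed

theorem mainTheorem6:
  fixes r :: nat
  assumes "r \<ge> 1"
  shows "(odd r \<longrightarrow> rd_iso (cover_dual r 2 (Qform 0 1 r)) (GSp_datum r)) \<and>
         (even r \<longrightarrow> rd_iso (cover_dual r 2 (Qform 0 1 r)) (times_Gm (PGSp_datum r)))"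
proof (intro conjI impI)
  assume "odd r" then obtain k where "r = 2*k+1" by (rule oddE)
  then show "rd_iso (cover_dual r 2 (Qform 0 1 r)) (GSp_datum r)" using odd_case assms by blast
next
  assume "even r" then obtain k where "r = 2*k" by (rule evenE)
  then show "rd_iso (cover_dual r 2 (Qform 0 1 r)) (times_Gm (PGSp_datum r))" using even_case assms by blast
qed

end
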